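(* Let $A$ be a metabelian Lie $U$-algebra over a field $k$ and let $B$ be a subalgebra of $A$. Then $B$ is a $U$-algebra.
   Context: A Lie algebra is metabelian if $(a\circ b)\circ(c\circ d)=0$ identically; $\mathrm{Fit}(A)$ is the ideal generated by all elements lying in nilpotent ideals of $A$. If $\mathrm{Fit}(A)$ is abelian, choose $\{a_\alpha:\alpha\in\Lambda\}\subseteq A$ whose images form a basis of $A/\mathrm{Fit}(A)$, let $R=k[x_\alpha:\alpha\in\Lambda]$, and make $\mathrm{Fit}(A)$ an $R$-module via $b\cdot x_\alpha=b\circ a_\alpha$ (extended multiplicatively and linearly). $A$ is a $U$-algebra if $\mathrm{Fit}(A)$ is abelian and a torsion-free $R$-module. *)

theory Defs
  imports Main "HOL.Vector_Spaces" "HOL-Library.Poly_Mapping"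
begin

text \<open>A Lie algebra over a field 'k, on the whole type 'a, with scalar
multiplication sc and Lie bracket br (written a \<circ> b in the paper).\<close>

definition lie_algebra :: "('k::field \<Rightarrow> 'a::ab_group_add \<Rightarrow> 'a) \<Rightarrow> ('a \<Rightarrow> 'a \<Rightarrow> 'a) \<Rightarrow> bool" where
  "lie_algebra sc br \<longleftrightarrow> Vector_Spaces.vector_space sc \<and>
     (\<forall>x y z. br (x + y) z = br x z + br y z \<and> br x (y + z) = br x y + br x z) \<and>
     (\<forall>c x y. br (sc c x) y = sc c (br x y) \<and> br x (sc c y) = sc c (br x y)) \<and>
     (\<forall>x. br x x = 0) \<and>
     (\<forall>x y z. br x (br y z) + br y (br z x) + br z (br x y) = 0)"

definition metabelian :: "('a \<Rightarrow> 'a \<Rightarrow> 'a::ab_group_add) \<Rightarrow> 'a set \<Rightarrow> bool" where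
  "metabelian br S \<longleftrightarrow> (\<forall>a\<in>S. \<forall>b\<in>S. \<forall>c\<in>S. \<forall>d\<in>S. br (br a b) (br c d) = 0)"

definition subalgebra :: "('k::field \<Rightarrow> 'a::ab_group_add \<Rightarrow> 'a) \<Rightarrow> ('a \<Rightarrow> 'a \<Rightarrow> 'a) \<Rightarrow> 'a set \<Rightarrow> bool" where
  "subalgebra sc br S \<longleftrightarrow> module.subspace sc S \<and> (\<forall>x\<in>S. \<forall>y\<in>S. br x y \<in> S)"

definition lie_ideal :: "('k::field \<Rightarrow> 'a::ab_group_add \<Rightarrow> 'a) \<Rightarrow> ('a \<Rightarrow> 'a \<Rightarrow> 'a) \<Rightarrow> 'a set \<Rightarrow> 'a set \<Rightarrow> bool" where
  "lie_ideal sc br S I \<longleftrightarrow> module.subspace sc I \<and> I \<subseteq> S \<and> (\<forall>x\<in>I. \<forall>y\<in>S. br x y \<in> I)"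

primrec lcs :: "('k::field \<Rightarrow> 'a::ab_group_add \<Rightarrow> 'a) \<Rightarrow> ('a \<Rightarrow> 'a \<Rightarrow> 'a) \<Rightarrow> 'a set \<Rightarrow> nat \<Rightarrow> 'a set" where
  "lcs sc br I 0 = I"
| "lcs sc br I (Suc n) = module.span sc {br x y | x y. x \<in> lcs sc br I n \<and> y \<in> I}"

definition nilpotent_lie :: "('k::field \<Rightarrow> 'a::ab_group_add \<Rightarrow> 'a) \<Rightarrow> ('a \<Rightarrow> 'a \<Rightarrow> 'a) \<Rightarrow> 'a set \<Rightarrow> bool" where
  "nilpotent_lie sc br I \<longleftrightarrow> (\<exists>n. lcs sc br I n = {0})"

definition Fit :: "('k::field \<Rightarrow> 'a::ab_group_add \<Rightarrow> 'a) \<Rightarrow> ('a \<Rightarrow> 'a \<Rightarrow> 'a) \<Rightarrow> 'a set \<Rightarrow> 'a set" where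
  "Fit sc br S = \<Inter> {J. lie_ideal sc br S J \<and>
      \<Union> {I. lie_ideal sc br S I \<and> nilpotent_lie sc br I} \<subseteq> J}"

definition abelian_set :: "('a \<Rightarrow> 'a \<Rightarrow> 'a::ab_group_add) \<Rightarrow> 'a set \<Rightarrow> bool" where
  "abelian_set br I \<longleftrightarrow> (\<forall>x\<in>I. \<forall>y\<in>I. br x y = 0)"

text \<open>As \<subseteq> S is a set of representatives whose images form a basis of S/W.\<close>
definition quot_basis :: "('k::field \<Rightarrow> 'a::ab_group_add \<Rightarrow> 'a) \<Rightarrow> 'a set \<Rightarrow> 'a set \<Rightarrow> 'a set \<Rightarrow> bool" where
  "quot_basis sc S W As \<longleftrightarrow> As \<subseteq> S \<and>
     (\<forall>F c. finite F \<longrightarrow> F \<subseteq> As \<longrightarrow> (\<Sum>x\<in>F. sc (c x) x) \<in> W \<longrightarrow> (\<forall>x\<in>F. c x = 0)) \<and>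
     S \<subseteq> module.span sc (As \<union> W)"

text \<open>Polynomials over 'k in commuting variables x_a indexed by elements a of 'a:
  finitely supported maps from monomials (exponent vectors) to coefficients.
  R(As) = k[x_a : a \<in> As] is the set of polynomials involving only variables in As.\<close>
type_synonym ('a, 'k) mpoly = "('a \<Rightarrow>\<^sub>0 nat) \<Rightarrow>\<^sub>0 'k"

definition polys_in :: "'a set \<Rightarrow> ('a, 'k::zero) mpoly set" where
  "polys_in As = {p. \<forall>m \<in> Poly_Mapping.keys p. Poly_Mapping.keys m \<subseteq> As}"

definition var :: "'a \<Rightarrow> ('a, 'k::{zero,one}) mpoly" where
  "var a = Poly_Mapping.single (Poly_Mapping.single a 1) 1"

definition const :: "'k::zero \<Rightarrow> ('a, 'k) mpoly" where
  "const c = Poly_Mapping.single 0 c"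

text \<open>act is the R(As)-module structure on M = Fit(S) with b \<cdot> x_a = b \<circ> a.\<close>
definition fit_module_action ::
  "('k::field \<Rightarrow> 'a::ab_group_add \<Rightarrow> 'a) \<Rightarrow> ('a \<Rightarrow> 'a \<Rightarrow> 'a) \<Rightarrow> 'a set \<Rightarrow> 'a set
     \<Rightarrow> ('a \<Rightarrow> ('a, 'k) mpoly \<Rightarrow> 'a) \<Rightarrow> bool" where
  "fit_module_action sc br M As act \<longleftrightarrow>
     (\<forall>b\<in>M. \<forall>p\<in>polys_in As. act b p \<in> M) \<and>
     (\<forall>b\<in>M. \<forall>b'\<in>M. \<forall>p\<in>polys_in As. act (b + b') p = act b p + act b' p) \<and>
     (\<forall>b\<in>M. \<forall>p\<in>polys_in As. \<forall>q\<in>polys_in As. act b (p + q) = act b p + act b q) \<and>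
     (\<forall>b\<in>M. \<forall>p\<in>polys_in As. \<forall>q\<in>polys_in As. act b (p * q) = act (act b p) q) \<and>
     (\<forall>b\<in>M. \<forall>c. act b (const c) = sc c b) \<and>
     (\<forall>b\<in>M. \<forall>a\<in>As. act b (var a) = br b a)"

definition torsion_free_action :: "'a::ab_group_add set \<Rightarrow> 'a set \<Rightarrow> ('a \<Rightarrow> ('a, 'k::field) mpoly \<Rightarrow> 'a) \<Rightarrow> bool" where
  "torsion_free_action M As act \<longleftrightarrow>
     (\<forall>b\<in>M. \<forall>p\<in>polys_in As. b \<noteq> 0 \<longrightarrow> p \<noteq> 0 \<longrightarrow> act b p \<noteq> 0)"

definition U_algebra :: "('k::field \<Rightarrow> 'a::ab_group_add \<Rightarrow> 'a) \<Rightarrow> ('a \<Rightarrow> 'a \<Rightarrow> 'a) \<Rightarrow> 'a set \<Rightarrow> bool" where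
  "U_algebra sc br S \<longleftrightarrow> abelian_set br (Fit sc br S) \<and>
     (\<forall>As. quot_basis sc S (Fit sc br S) As \<longrightarrow>
        (\<exists>act :: 'a \<Rightarrow> ('a, 'k) mpoly \<Rightarrow> 'a.
            fit_module_action sc br (Fit sc br S) As act \<and>
            torsion_free_action (Fit sc br S) As act))"

end

theory Submission
  imports Defs
begin


lemma LA_vs: "lie_algebra sc br \<Longrightarrow> vector_space sc"
  by (simp add: lie_algebra_def)

lemma LA_facts:
  assumes "lie_algebra sc br"
  shows LA_addl: "br (x + y) z = br x z + br y z"
    and LA_addr: "br x (y + z) = br x y + br x z"
    and LA_scl: "br (sc c x) y = sc c (br x y)"
    and LA_scr: "br x (sc c y) = sc c (br x y)"
    and LA_alt: "br x x = 0"
    and LA_jac: "br x (br y z) + br y (br z x) + br z (br x y) = 0"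
  using assms unfolding lie_algebra_def by blast+

lemma LA_more:
  assumes "lie_algebra sc br"
  shows LA_0l: "br 0 y = 0" and LA_0r: "br y 0 = 0"
    and LA_anti: "br x y = - br y x"
    and LA_suml: "br (sum f F) y = (\<Sum>i\<in>F. br (f i) y)"
    and LA_sumr: "br y (sum f F) = (\<Sum>i\<in>F. br y (f i))"
proof -
  have a: "br (0+0) y = br 0 y + br 0 y" by (rule LA_addl[OF assms])
  thus z1: "br 0 y = 0" by simp
  have b: "br y (0+0) = br y 0 + br y 0" by (rule LA_addr[OF assms])
  thus z2: "br y 0 = 0" by simp
  have "br (x+y) (x+y) = 0" by (rule LA_alt[OF assms])
  hence "br x x + br x y + (br y x + br y y) = 0"
    by (simp add: LA_addl[OF assms] LA_addr[OF assms] ac_simps)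
  thus "br x y = - br y x" by (simp add: LA_alt[OF assms] eq_neg_iff_add_eq_0)
  show "br (sum f F) y = (\<Sum>i\<in>F. br (f i) y)"
    by (induct F rule: infinite_finite_induct) (auto simp: z1 LA_addl[OF assms])
  show "br y (sum f F) = (\<Sum>i\<in>F. br y (f i))"
    by (induct F rule: infinite_finite_induct) (auto simp: z2 LA_addr[OF assms])
qed

lemma fit_ideal:
  assumes "lie_algebra sc br" "subalgebra sc br S"
  shows "lie_ideal sc br S (Fit sc br S)"
proof -
  interpret vector_space sc using LA_vs[OF assms(1)] .
  have S: "lie_ideal sc br S S" using assms(2) by (auto simp: lie_ideal_def subalgebra_def)
  let ?F = "{J. lie_ideal sc br S J \<and> \<Union> {I. lie_ideal sc br S I \<and> nilpotent_lie sc br I} \<subseteq> J}"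
  have SF: "S \<in> ?F" using S by (auto simp: lie_ideal_def)
  have "subspace (\<Inter>?F)" by (rule subspace_Inter) (auto simp: lie_ideal_def)
  moreover have "\<Inter>?F \<subseteq> S" using SF by blast
  moreover have "\<forall>x\<in>\<Inter>?F. \<forall>y\<in>S. br x y \<in> \<Inter>?F" by (auto simp: lie_ideal_def)
  ultimately show ?thesis by (simp add: lie_ideal_def Fit_def)
qed

lemma fit_upper:
  "lie_ideal sc br S I \<Longrightarrow> nilpotent_lie sc br I \<Longrightarrow> I \<subseteq> Fit sc br S"
  by (auto simp: Fit_def)

lemma fit_least:
  "lie_ideal sc br S J \<Longrightarrow> (\<And>I. lie_ideal sc br S I \<Longrightarrow> nilpotent_lie sc br I \<Longrightarrow> I \<subseteq> J)
   \<Longrightarrow> Fit sc br S \<subseteq> J"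
  unfolding Fit_def by (rule Inter_lower) blast

lemma abelian_nilp:
  assumes "lie_algebra sc br" "abelian_set br I"
  shows "nilpotent_lie sc br I"
proof -
  interpret vector_space sc using LA_vs[OF assms(1)] .
  have "{br x y | x y. x \<in> I \<and> y \<in> I} \<subseteq> {0}" using assms(2) by (auto simp: abelian_set_def)
  hence "span {br x y | x y. x \<in> I \<and> y \<in> I} \<subseteq> {0}" by (rule span_minimal) simp
  hence "lcs sc br I 1 = {0}" using span_zero by auto
  thus ?thesis unfolding nilpotent_lie_def by blast
qed


lemma extend_qb:
  fixes sc :: "'k::field \<Rightarrow> 'a::ab_group_add \<Rightarrow> 'a"
  assumes vs: "vector_space sc" and M: "module.subspace sc M"
   and X: "\<forall>F c. finite F \<longrightarrow> F \<subseteq> X \<longrightarrow> (\<Sum>x\<in>F. sc (c x) x) \<in> M \<longrightarrow> (\<forall>x\<in>F. c x = 0)"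
  shows "\<exists>As. X \<subseteq> As \<and> quot_basis sc UNIV M As"
proof -
  interpret vector_space sc using vs .
  obtain C where C: "C \<subseteq> M" "independent C" "M \<subseteq> span C"
    using maximal_independent_subset by metis
  have spC: "span C \<subseteq> M" using C(1) M by (rule span_minimal)
  have XM: "X \<inter> M = {}"
  proof (rule ccontr)
    assume "X \<inter> M \<noteq> {}"
    then obtain x where x: "x \<in> X" "x \<in> M" by blast
    have "(\<Sum>y\<in>{x}. sc ((\<lambda>_. 1::'k) y) y) \<in> M" using x by simp
    moreover have "finite {x}" "{x} \<subseteq> X" using x by auto
    ultimately have "\<forall>y\<in>{x}. (\<lambda>_. 1::'k) y = 0" using X[rule_format, of "{x}" "\<lambda>_. 1"] by simp
    thus False by simp
  qed
  have indXC: "independent (X \<union> C)"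
    unfolding independent_explicit_finite_subsets
  proof (intro allI impI ballI)
    fix S u v assume S: "S \<subseteq> X \<union> C" "finite S" and su: "(\<Sum>v\<in>S. sc (u v) v) = 0" and v: "v \<in> S"
    let ?S1 = "S \<inter> X" and ?S2 = "S - X"
    have split: "(\<Sum>v\<in>S. sc (u v) v) = (\<Sum>v\<in>?S1. sc (u v) v) + (\<Sum>v\<in>?S2. sc (u v) v)"
      using S(2) by (rule sum.Int_Diff)
    have S2C: "?S2 \<subseteq> C" using S by blast
    have "(\<Sum>v\<in>?S2. sc (u v) v) \<in> span C"
      using S2C by (intro span_sum span_scale) (auto intro: span_base)
    hence "(\<Sum>v\<in>?S2. sc (u v) v) \<in> M" using spC by blast
    hence "- (\<Sum>v\<in>?S2. sc (u v) v) \<in> M" by (rule subspace_neg[OF M])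
    moreover have "(\<Sum>v\<in>?S1. sc (u v) v) = - (\<Sum>v\<in>?S2. sc (u v) v)"
      using split su by (simp add: eq_neg_iff_add_eq_0)
    ultimately have "(\<Sum>v\<in>?S1. sc (u v) v) \<in> M" by simp
    hence u1: "\<forall>x\<in>?S1. u x = 0" using X[rule_format, of ?S1 u] S(2) by simp
    hence "(\<Sum>v\<in>?S1. sc (u v) v) = 0" by simp
    hence "(\<Sum>v\<in>?S2. sc (u v) v) = 0" using split su by simp
    hence u2: "\<forall>x\<in>?S2. u x = 0"
      using C(2)[unfolded independent_explicit_finite_subsets, rule_format, of ?S2 u] S2C S(2) by simp
    show "u v = 0" using u1 u2 v by blast
  qed
  define E where "E = extend_basis (X \<union> C)"
  have E: "X \<union> C \<subseteq> E" "independent E" "span E = UNIV"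
    using extend_basis_superset[OF indXC] independent_extend_basis[OF indXC] span_extend_basis[OF indXC]
    unfolding E_def by auto
  define As where "As = E - C"
  have "X \<subseteq> As" using E(1) XM C(1) unfolding As_def by blast
  moreover have "quot_basis sc UNIV M As"
    unfolding quot_basis_def
  proof (intro conjI allI impI)
    show "As \<subseteq> UNIV" by simp
    show "UNIV \<subseteq> span (As \<union> M)"
    proof -
      have "E \<subseteq> As \<union> M" using C(1) unfolding As_def by blast
      hence "span E \<subseteq> span (As \<union> M)" by (rule span_mono)
      thus ?thesis using E(3) by simp
    qed
    fix F c assume F: "finite F" "F \<subseteq> As" and s: "(\<Sum>x\<in>F. sc (c x) x) \<in> M"
    hence "(\<Sum>x\<in>F. sc (c x) x) \<in> span C" using C(3) by blast
    then obtain t r where t: "finite t" "t \<subseteq> C" and tr: "(\<Sum>x\<in>F. sc (c x) x) = (\<Sum>a\<in>t. sc (r a) a)"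
      unfolding span_explicit by blast
    have disj: "F \<inter> t = {}" using F(2) t(2) unfolding As_def by blast
    define w where "w v = (if v \<in> F then c v else - r v)" for v
    have "(\<Sum>v\<in>F \<union> t. sc (w v) v) = (\<Sum>v\<in>F. sc (w v) v) + (\<Sum>v\<in>t. sc (w v) v)"
      using F(1) t(1) disj by (rule sum.union_disjoint)
    also have "(\<Sum>v\<in>F. sc (w v) v) = (\<Sum>x\<in>F. sc (c x) x)" by (simp add: w_def)
    also have "(\<Sum>v\<in>t. sc (w v) v) = - (\<Sum>a\<in>t. sc (r a) a)"
      using disj by (auto simp: w_def sum_negf[symmetric] intro!: sum.cong)
    finally have "(\<Sum>v\<in>F \<union> t. sc (w v) v) = 0" using tr by simp
    moreover have "F \<union> t \<subseteq> E" using F(2) t(2) E(1) unfolding As_def by blast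
    moreover have "finite (F \<union> t)" using F(1) t(1) by simp
    ultimately have "\<forall>v\<in>F \<union> t. w v = 0"
      using E(2)[unfolded independent_explicit_finite_subsets, rule_format, of "F \<union> t" w] by simp
    thus "\<forall>x\<in>F. c x = 0" unfolding w_def by (metis UnI1)
  qed
  ultimately show ?thesis by blast
qed


lemma polys_in_add: assumes "p \<in> polys_in X" "q \<in> polys_in X" shows "p + q \<in> polys_in X"
proof -
  { fix m assume "m \<in> Poly_Mapping.keys (p + q)"
    hence "m \<in> Poly_Mapping.keys p \<or> m \<in> Poly_Mapping.keys q" using keys_add[of p q] by auto
    hence "Poly_Mapping.keys m \<subseteq> X" using assms unfolding polys_in_def by auto }
  thus ?thesis unfolding polys_in_def by auto
qed

lemma polys_in_mult:
  assumes "p \<in> polys_in X" "q \<in> polys_in X" shows "p * q \<in> polys_in X"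
proof -
  { fix m assume "m \<in> Poly_Mapping.keys (p * q)"
    then obtain a b where "m = a + b" "a \<in> Poly_Mapping.keys p" "b \<in> Poly_Mapping.keys q" using keys_mult by blast
    hence "Poly_Mapping.keys m \<subseteq> Poly_Mapping.keys a \<union> Poly_Mapping.keys b" using keys_add[of a b] by simp
    moreover have "Poly_Mapping.keys a \<subseteq> X" "Poly_Mapping.keys b \<subseteq> X"
      using assms \<open>a \<in> _\<close> \<open>b \<in> _\<close> unfolding polys_in_def by auto
    ultimately have "Poly_Mapping.keys m \<subseteq> X" by auto }
  thus ?thesis unfolding polys_in_def by auto
qed

lemma polys_in_single: "Poly_Mapping.keys m \<subseteq> X \<Longrightarrow> Poly_Mapping.single m c \<in> polys_in X"
  unfolding polys_in_def by (cases "c = 0") auto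

lemma polys_in_zero: "0 \<in> polys_in X"
  unfolding polys_in_def by simp

lemma polys_in_mono: "X \<subseteq> Y \<Longrightarrow> polys_in X \<subseteq> polys_in Y"
  unfolding polys_in_def by auto

lemma polys_in_sum: "(\<And>i. i \<in> S \<Longrightarrow> f i \<in> polys_in X) \<Longrightarrow> sum f S \<in> polys_in X"
  by (induct S rule: infinite_finite_induct) (auto intro: polys_in_add polys_in_zero)

lemma pm_sum_single: "(p::'x \<Rightarrow>\<^sub>0 'b::comm_monoid_add) = (\<Sum>m\<in>Poly_Mapping.keys p. Poly_Mapping.single m (Poly_Mapping.lookup p m))"
proof (rule poly_mapping_eqI)
  fix k
  have "Poly_Mapping.lookup (\<Sum>m\<in>Poly_Mapping.keys p. Poly_Mapping.single m (Poly_Mapping.lookup p m)) k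
      = (\<Sum>m\<in>Poly_Mapping.keys p. (Poly_Mapping.lookup p m when m = k))"
    by (simp add: lookup_sum lookup_single)
  also have "\<dots> = (\<Sum>m\<in>Poly_Mapping.keys p. (if m = k then Poly_Mapping.lookup p k else 0))"
    by (rule sum.cong) auto
  also have "\<dots> = Poly_Mapping.lookup p k"
    by (simp add: sum.delta in_keys_iff)
  finally show "Poly_Mapping.lookup p k = Poly_Mapping.lookup (\<Sum>m\<in>Poly_Mapping.keys p. Poly_Mapping.single m (Poly_Mapping.lookup p m)) k" by simp
qed

lemma act_zero:
  assumes "fit_module_action sc br M As act" "b \<in> M"
  shows "act b 0 = 0"
proof -
  have "act b (0 + 0) = act b 0 + act b 0"
    using assms polys_in_zero unfolding fit_module_action_def by blast
  thus ?thesis by simp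
qed

lemma act_sum:
  assumes A: "fit_module_action sc br M As act" and b: "b \<in> M"
  shows "(\<And>i. i \<in> S \<Longrightarrow> f i \<in> polys_in As) \<Longrightarrow> act b (sum f S) = (\<Sum>i\<in>S. act b (f i))"
proof (induct S rule: infinite_finite_induct)
  case (infinite S) thus ?case using act_zero[OF A b] by simp
next
  case empty thus ?case using act_zero[OF A b] by simp
next
  case (insert x F)
  have "act b (f x + sum f F) = act b (f x) + act b (sum f F)"
    using A b insert.prems polys_in_sum[of F f As] unfolding fit_module_action_def by blast
  thus ?case using insert by simp
qed

lemma act_closed:
  fixes sc :: "'k::field \<Rightarrow> 'a::ab_group_add \<Rightarrow> 'a"
  assumes vs: "vector_space sc" and A: "fit_module_action sc br M As act"
    and XAs: "X \<subseteq> As" and TM: "T \<subseteq> M" and T: "module.subspace sc T"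
    and Tbr: "\<forall>b\<in>T. \<forall>a\<in>X. br b a \<in> T"
  shows "\<forall>b\<in>T. \<forall>p\<in>polys_in X. act b p \<in> T"
proof -
  interpret vector_space sc using vs .
  have P: "polys_in X \<subseteq> polys_in As" using XAs by (rule polys_in_mono)
  have Aclos: "\<And>b p. b \<in> M \<Longrightarrow> p \<in> polys_in As \<Longrightarrow> act b p \<in> M"
    and Amul: "\<And>b p q. b \<in> M \<Longrightarrow> p \<in> polys_in As \<Longrightarrow> q \<in> polys_in As \<Longrightarrow> act b (p * q) = act (act b p) q"
    and Aconst: "\<And>b c. b \<in> M \<Longrightarrow> act b (const c) = sc c b"
    and Avar: "\<And>b a. b \<in> M \<Longrightarrow> a \<in> As \<Longrightarrow> act b (var a) = br b a"
    using A unfolding fit_module_action_def by blast+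
  have pow: "\<forall>b\<in>T. act b (Poly_Mapping.single (Poly_Mapping.single a n) 1) \<in> T" if a: "a \<in> X" for a n
  proof (induct n)
    case 0
    have "\<forall>b\<in>T. act b 1 = b" using Aconst[of _ 1] TM by (auto simp: const_def scale_one)
    thus ?case by simp
  next
    case (Suc n)
    have e: "Poly_Mapping.single (Poly_Mapping.single a (Suc n)) (1::'k)
        = Poly_Mapping.single (Poly_Mapping.single a n) 1 * var a"
      by (simp add: var_def mult_single single_add[symmetric])
    show ?case
    proof
      fix b assume b: "b \<in> T"
      have p1: "Poly_Mapping.single (Poly_Mapping.single a n) (1::'k) \<in> polys_in As"
        using a XAs by (intro polys_in_single) auto
      have p2: "var a \<in> polys_in As" using a XAs unfolding var_def by (intro polys_in_single) auto
      have "act b (Poly_Mapping.single (Poly_Mapping.single a (Suc n)) 1)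
          = br (act b (Poly_Mapping.single (Poly_Mapping.single a n) 1)) a"
      proof -
        have bM: "b \<in> M" using b TM by blast
        have "act b (Poly_Mapping.single (Poly_Mapping.single a n) 1 * var a)
           = act (act b (Poly_Mapping.single (Poly_Mapping.single a n) 1)) (var a)"
          by (rule Amul[OF bM p1 p2])
        also have "\<dots> = br (act b (Poly_Mapping.single (Poly_Mapping.single a n) 1)) a"
          using Avar Aclos[OF bM p1] a XAs by blast
        finally show ?thesis unfolding e .
      qed
      also have "\<dots> \<in> T" using Suc b a Tbr by blast
      finally show "act b (Poly_Mapping.single (Poly_Mapping.single a (Suc n)) 1) \<in> T" .
    qed
  qed
  have monoS: "\<forall>b\<in>T. act b (Poly_Mapping.single (\<Sum>a\<in>S. Poly_Mapping.single a (g a)) 1) \<in> T"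
    if S: "finite S" "S \<subseteq> X" for S g
    using S
  proof (induct S rule: finite_induct)
    case empty
    have "\<forall>b\<in>T. act b 1 = b" using Aconst[of _ 1] TM by (auto simp: const_def scale_one)
    thus ?case by simp
  next
    case (insert x F)
    let ?P = "Poly_Mapping.single (Poly_Mapping.single x (g x)) (1::'k)"
    let ?Q = "Poly_Mapping.single (\<Sum>a\<in>F. Poly_Mapping.single a (g a)) (1::'k)"
    have e: "Poly_Mapping.single (\<Sum>a\<in>insert x F. Poly_Mapping.single a (g a)) (1::'k) = ?P * ?Q"
      using insert(1,2) by (simp add: mult_single)
    have pP: "?P \<in> polys_in As" using insert XAs by (intro polys_in_single) auto
    have kQ: "Poly_Mapping.keys (\<Sum>a\<in>F. Poly_Mapping.single a (g a)) \<subseteq> As"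
      using keys_sum[of "\<lambda>a. Poly_Mapping.single a (g a)" F] insert XAs by auto
    have pQ: "?Q \<in> polys_in As" using kQ by (rule polys_in_single)
    show ?case
    proof
      fix b assume b: "b \<in> T"
      have "act b ?P \<in> T" using pow insert b by blast
      hence "act (act b ?P) ?Q \<in> T" using insert by blast
      thus "act b (Poly_Mapping.single (\<Sum>a\<in>insert x F. Poly_Mapping.single a (g a)) 1) \<in> T"
        unfolding e using Amul[OF _ pP pQ, of b] b TM \<open>act (act b ?P) ?Q \<in> T\<close> by (simp add: subset_iff)
    qed
  qed
  have mono: "\<forall>b\<in>T. act b (Poly_Mapping.single m 1) \<in> T" if m: "Poly_Mapping.keys m \<subseteq> X" for m
  proof -
    have eq: "(\<Sum>a\<in>Poly_Mapping.keys m. Poly_Mapping.single a (Poly_Mapping.lookup m a)) = m"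
      by (rule pm_sum_single[symmetric])
    show ?thesis using monoS[OF finite_keys m, of "Poly_Mapping.lookup m"] unfolding eq .
  qed
  show ?thesis
  proof (intro ballI)
    fix b and p :: "('a \<Rightarrow>\<^sub>0 nat) \<Rightarrow>\<^sub>0 'k" assume b: "b \<in> T" and p: "p \<in> polys_in X"
    have terms: "Poly_Mapping.single m (Poly_Mapping.lookup p m) \<in> polys_in As" if "m \<in> Poly_Mapping.keys p" for m
      using that p XAs unfolding polys_in_def by (intro polys_in_single[unfolded polys_in_def]) auto
    have "act b p = (\<Sum>m\<in>Poly_Mapping.keys p. act b (Poly_Mapping.single m (Poly_Mapping.lookup p m)))"
    proof -
      have bM: "b \<in> M" using b TM by blast
      have "act b (\<Sum>m\<in>Poly_Mapping.keys p. Poly_Mapping.single m (Poly_Mapping.lookup p m))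
         = (\<Sum>m\<in>Poly_Mapping.keys p. act b (Poly_Mapping.single m (Poly_Mapping.lookup p m)))"
        by (rule act_sum[OF A bM terms])
      with arg_cong[where f="act b", OF pm_sum_single[of p]] show ?thesis by (rule trans)
    qed
    also have "\<dots> \<in> T"
    proof (rule subspace_sum[OF T])
      fix m assume m: "m \<in> Poly_Mapping.keys p"
      have km: "Poly_Mapping.keys m \<subseteq> X" using m p unfolding polys_in_def by blast
      have e: "Poly_Mapping.single m (Poly_Mapping.lookup p m) = const (Poly_Mapping.lookup p m) * Poly_Mapping.single m 1"
        by (simp add: const_def mult_single)
      have c: "const (Poly_Mapping.lookup p m) \<in> polys_in As" unfolding const_def by (rule polys_in_single) simp
      have s: "Poly_Mapping.single m (1::'k) \<in> polys_in As" using km XAs by (intro polys_in_single) auto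
      have "act b (Poly_Mapping.single m (Poly_Mapping.lookup p m)) = act (sc (Poly_Mapping.lookup p m) b) (Poly_Mapping.single m 1)"
      proof -
        have bM: "b \<in> M" using b TM by blast
        show ?thesis unfolding e using Amul[OF bM c s] Aconst[OF bM] by simp
      qed
      also have "\<dots> \<in> T" using mono[OF km] subspace_scale[OF T b] by blast
      finally show "act b (Poly_Mapping.single m (Poly_Mapping.lookup p m)) \<in> T" .
    qed
    finally show "act b p \<in> T" .
  qed
qed


lemma span_abelian:
  assumes LA: "lie_algebra sc br" and G: "\<forall>g\<in>G. \<forall>h\<in>G. br g h = 0"
    and u: "u \<in> module.span sc G" and v: "v \<in> module.span sc G"
  shows "br u v = 0"
proof -
  interpret vector_space sc using LA_vs[OF LA] .
  have 1: "br u' h = 0" if "u' \<in> span G" "h \<in> G" for u' h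
    using that(1)
  proof (induct rule: span_induct_alt)
    case base show ?case by (rule LA_0l[OF LA])
  next
    case (step c x y) thus ?case using G that(2)
      by (simp add: LA_addl[OF LA] LA_scl[OF LA])
  qed
  show ?thesis using v
  proof (induct rule: span_induct_alt)
    case base show ?case by (rule LA_0r[OF LA])
  next
    case (step c x y) thus ?case using 1[OF u]
      by (simp add: LA_addr[OF LA] LA_scr[OF LA])
  qed
qed

lemma brackets_in_fit:
  assumes LA: "lie_algebra sc br" and MB: "metabelian br UNIV"
  shows "br x y \<in> Fit sc br UNIV"
proof -
  interpret vector_space sc using LA_vs[OF LA] .
  define G where "G = {br a b | a b. True}"
  define D where "D = span G"
  have "lie_ideal sc br UNIV D"
    unfolding lie_ideal_def D_def G_def by (auto intro: span_base)
  moreover have "abelian_set br D"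
    unfolding abelian_set_def D_def
  proof (intro ballI)
    fix u v assume "u \<in> span G" "v \<in> span G"
    moreover have "\<forall>g\<in>G. \<forall>h\<in>G. br g h = 0" using MB unfolding G_def metabelian_def by auto
    ultimately show "br u v = 0" using span_abelian[OF LA] by blast
  qed
  hence "nilpotent_lie sc br D" by (rule abelian_nilp[OF LA])
  ultimately have "D \<subseteq> Fit sc br UNIV" by (rule fit_upper)
  moreover have "br x y \<in> D" unfolding D_def G_def by (auto intro: span_base)
  ultimately show ?thesis by blast
qed

lemma single_single_eq: "Poly_Mapping.single a (1::nat) = Poly_Mapping.single b 1 \<longleftrightarrow> a = b"
proof
  assume "Poly_Mapping.single a (1::nat) = Poly_Mapping.single b 1"
  hence "Poly_Mapping.lookup (Poly_Mapping.single a (1::nat)) b = 1" by simp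
  thus "a = b" by (cases "a = b") (auto simp: lookup_single_not_eq)
qed simp

lemma const_poly:
  assumes "(p :: ('a, 'k::zero) mpoly) \<in> polys_in {}"
  shows "p = Poly_Mapping.single 0 (Poly_Mapping.lookup p 0)"
proof (rule poly_mapping_eqI)
  fix k
  show "Poly_Mapping.lookup p k = Poly_Mapping.lookup (Poly_Mapping.single 0 (Poly_Mapping.lookup p 0)) k"
  proof (cases "k = 0")
    case False
    hence "k \<notin> Poly_Mapping.keys p" using assms unfolding polys_in_def by auto
    thus ?thesis using False by (simp add: in_keys_iff lookup_single_not_eq)
  qed simp
qed

lemma fma_D:
  assumes "fit_module_action sc br M As act"
  shows fma_cl: "\<And>b p. b \<in> M \<Longrightarrow> p \<in> polys_in As \<Longrightarrow> act b p \<in> M"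
    and fma_add1: "\<And>b b' p. b \<in> M \<Longrightarrow> b' \<in> M \<Longrightarrow> p \<in> polys_in As \<Longrightarrow> act (b + b') p = act b p + act b' p"
    and fma_add2: "\<And>b p q. b \<in> M \<Longrightarrow> p \<in> polys_in As \<Longrightarrow> q \<in> polys_in As \<Longrightarrow> act b (p + q) = act b p + act b q"
    and fma_mul: "\<And>b p q. b \<in> M \<Longrightarrow> p \<in> polys_in As \<Longrightarrow> q \<in> polys_in As \<Longrightarrow> act b (p * q) = act (act b p) q"
    and fma_const: "\<And>b c. b \<in> M \<Longrightarrow> act b (const c) = sc c b"
    and fma_var: "\<And>b a. b \<in> M \<Longrightarrow> a \<in> As \<Longrightarrow> act b (var a) = br b a"
  using assms unfolding fit_module_action_def by blast+

lemma act_monomial: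
  assumes A: "fit_module_action sc br M As act" and y: "y \<in> M" and a: "a \<in> As"
    and LA: "lie_algebra sc br" and Ms: "module.subspace sc M"
  shows "act y (Poly_Mapping.single (Poly_Mapping.single a 1) c) = sc c (br y a)"
proof -
  interpret vector_space sc using LA_vs[OF LA] .
  have e: "Poly_Mapping.single (Poly_Mapping.single a 1) c = const c * var a"
    by (simp add: const_def var_def mult_single)
  have c: "const c \<in> polys_in As" unfolding const_def by (rule polys_in_single) simp
  have v: "var a \<in> polys_in As" unfolding var_def using a by (intro polys_in_single) auto
  have "act y (const c * var a) = act (act y (const c)) (var a)"
    by (rule fma_mul[OF A y c v])
  also have "\<dots> = act (sc c y) (var a)" using fma_const[OF A y] by simp
  also have "\<dots> = br (sc c y) a"
    by (rule fma_var[OF A subspace_scale[OF Ms y] a])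
  finally show ?thesis unfolding e by (simp add: LA_scl[OF LA])
qed

lemma adinj:
  fixes sc :: "'k::field \<Rightarrow> 'a::ab_group_add \<Rightarrow> 'a"
  assumes LA: "lie_algebra sc br" and UA: "U_algebra sc br UNIV"
    and b: "b \<notin> Fit sc br UNIV" and y: "y \<in> Fit sc br UNIV" "y \<noteq> 0"
  shows "br y b \<noteq> 0"
proof -
  interpret vector_space sc using LA_vs[OF LA] .
  define M where "M = Fit sc br UNIV"
  have subU: "subalgebra sc br UNIV" unfolding subalgebra_def by simp
  have Mid: "lie_ideal sc br UNIV M" unfolding M_def by (rule fit_ideal[OF LA subU])
  hence Ms: "subspace M" unfolding lie_ideal_def by blast
  have Mab: "abelian_set br M" using UA unfolding U_algebra_def M_def by blast
  obtain As0 where As0: "quot_basis sc UNIV M As0"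
    using extend_qb[OF LA_vs[OF LA] Ms, of "{}"] by auto
  then obtain act where A: "fit_module_action sc br M As0 act" and T: "torsion_free_action M As0 act"
    using UA unfolding U_algebra_def M_def by blast
  have "b \<in> span (As0 \<union> M)" using As0 unfolding quot_basis_def by blast
  then obtain t r where t: "finite t" "t \<subseteq> As0 \<union> M" and br_: "b = (\<Sum>a\<in>t. sc (r a) a)"
    unfolding span_explicit by blast
  let ?t1 = "t \<inter> As0" and ?t2 = "t - As0"
  have split: "b = (\<Sum>a\<in>?t1. sc (r a) a) + (\<Sum>a\<in>?t2. sc (r a) a)"
    unfolding br_ using t(1) by (rule sum.Int_Diff)
  have m: "(\<Sum>a\<in>?t2. sc (r a) a) \<in> M" using t(2) by (intro subspace_sum[OF Ms] subspace_scale[OF Ms]) auto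
  obtain a0 where a0: "a0 \<in> ?t1" "r a0 \<noteq> 0"
  proof (rule ccontr)
    assume "\<not> thesis"
    with that have "\<forall>a\<in>?t1. r a = 0" by blast
    hence "(\<Sum>a\<in>?t1. sc (r a) a) = 0" by simp
    hence "b \<in> M" using split m by simp
    thus False using b unfolding M_def by blast
  qed
  have "br y b = br y (\<Sum>a\<in>?t1. sc (r a) a) + br y (\<Sum>a\<in>?t2. sc (r a) a)"
    by (subst split) (rule LA_addr[OF LA])
  also have "br y (\<Sum>a\<in>?t2. sc (r a) a) = 0" using Mab m y unfolding abelian_set_def M_def by blast
  also have "br y (\<Sum>a\<in>?t1. sc (r a) a) = (\<Sum>a\<in>?t1. sc (r a) (br y a))"
    by (simp add: LA_sumr[OF LA] LA_scr[OF LA])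
  finally have eq: "br y b = (\<Sum>a\<in>?t1. sc (r a) (br y a))" by simp
  define p :: "('a, 'k) mpoly" where "p = (\<Sum>a\<in>?t1. Poly_Mapping.single (Poly_Mapping.single a 1) (r a))"
  have pin: "Poly_Mapping.single (Poly_Mapping.single a (1::nat)) (r a) \<in> polys_in As0" if "a \<in> ?t1" for a
    using that by (intro polys_in_single) auto
  have yM: "y \<in> M" using y unfolding M_def by simp
  have "act y p = (\<Sum>a\<in>?t1. act y (Poly_Mapping.single (Poly_Mapping.single a 1) (r a)))"
    unfolding p_def by (rule act_sum[OF A yM pin])
  also have "\<dots> = (\<Sum>a\<in>?t1. sc (r a) (br y a))"
    by (rule sum.cong[OF refl]) (rule act_monomial[OF A yM _ LA Ms], blast)
  finally have eq2: "act y p = br y b" using eq by simp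
  have "Poly_Mapping.lookup p (Poly_Mapping.single a0 1) = (\<Sum>a\<in>?t1. (r a when Poly_Mapping.single a (1::nat) = Poly_Mapping.single a0 1))"
    unfolding p_def by (simp add: lookup_sum lookup_single)
  also have "\<dots> = (\<Sum>a\<in>?t1. (if a = a0 then r a0 else 0))"
    by (intro sum.cong[OF refl]) (auto simp: when_def single_single_eq[unfolded One_nat_def])
  also have "\<dots> = r a0" using a0(1) t(1) by (simp add: sum.delta)
  finally have "p \<noteq> 0" using a0(2) by auto
  moreover have "p \<in> polys_in As0" unfolding p_def by (rule polys_in_sum) (rule pin)
  ultimately have "act y p \<noteq> 0" using T yM y(2) unfolding torsion_free_action_def by blast
  thus ?thesis using eq2 by simp
qed


lemma qbD:
  assumes "quot_basis sc S W As"
  shows "As \<subseteq> S" and "\<And>F c. finite F \<Longrightarrow> F \<subseteq> As \<Longrightarrow> (\<Sum>x\<in>F. sc (c x) x) \<in> W \<Longrightarrow> \<forall>x\<in>F. c x = 0"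
    and "S \<subseteq> module.span sc (As \<union> W)"
  using assms unfolding quot_basis_def by auto

theorem lemma3p2p2:
  fixes sc :: "'k::field \<Rightarrow> 'a::ab_group_add \<Rightarrow> 'a"
    and br :: "'a \<Rightarrow> 'a \<Rightarrow> 'a"
    and B :: "'a set"
  assumes "lie_algebra sc br"
    and "metabelian br UNIV"
    and "U_algebra sc br UNIV"
    and "subalgebra sc br B"
  shows "U_algebra sc br B"
proof -
  note LA = assms(1) and MBl = assms(2) and UA = assms(3) and SB = assms(4)
  interpret vector_space sc using LA_vs[OF LA] .
  define M where "M = Fit sc br UNIV"
  have subU: "subalgebra sc br UNIV" unfolding subalgebra_def by simp
  have Mid: "lie_ideal sc br UNIV M" unfolding M_def by (rule fit_ideal[OF LA subU])
  hence Ms: "subspace M" and Mbr: "\<And>x y. x \<in> M \<Longrightarrow> br x y \<in> M" unfolding lie_ideal_def by blast+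
  have Mab: "abelian_set br M" using UA unfolding U_algebra_def M_def by blast
  have UAq: "\<And>As. quot_basis sc UNIV M As \<Longrightarrow> \<exists>act :: 'a \<Rightarrow> ('a, 'k) mpoly \<Rightarrow> 'a.
            fit_module_action sc br M As act \<and> torsion_free_action M As act"
    using UA unfolding U_algebra_def M_def by blast
  have Bs: "subspace B" and Bbr: "\<And>x y. x \<in> B \<Longrightarrow> y \<in> B \<Longrightarrow> br x y \<in> B"
    using SB unfolding subalgebra_def by blast+
  have brM: "\<And>x y. br x y \<in> M" unfolding M_def by (rule brackets_in_fit[OF LA MBl])
  have FBid: "lie_ideal sc br B (Fit sc br B)" by (rule fit_ideal[OF LA SB])
  show ?thesis
  proof (cases "\<forall>N. lie_ideal sc br B N \<and> nilpotent_lie sc br N \<longrightarrow> N \<subseteq> M")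
    case True
    define MB where "MB = M \<inter> B"
    have MBs: "subspace MB" unfolding MB_def by (rule subspace_inter[OF Ms Bs])
    have MBid: "lie_ideal sc br B MB"
      unfolding lie_ideal_def MB_def using subspace_inter[OF Ms Bs] Mbr Bbr by blast
    have MBab: "abelian_set br MB" using Mab unfolding abelian_set_def MB_def by blast
    have "Fit sc br B \<subseteq> MB"
    proof (rule fit_least[OF MBid])
      fix I assume "lie_ideal sc br B I" "nilpotent_lie sc br I"
      thus "I \<subseteq> MB" using True unfolding MB_def lie_ideal_def by blast
    qed
    moreover have "MB \<subseteq> Fit sc br B"
      by (rule fit_upper[OF MBid abelian_nilp[OF LA MBab]])
    ultimately have FB: "Fit sc br B = MB" by blast
    show ?thesis unfolding U_algebra_def FB
    proof (intro conjI allI impI)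
      show "abelian_set br MB" by (rule MBab)
      fix As assume qb: "quot_basis sc B MB As"
      have AsB: "As \<subseteq> B" by (rule qbD(1)[OF qb])
      have X: "\<forall>F c. finite F \<longrightarrow> F \<subseteq> As \<longrightarrow> (\<Sum>x\<in>F. sc (c x) x) \<in> M \<longrightarrow> (\<forall>x\<in>F. c x = 0)"
      proof (intro allI impI)
        fix F c assume F: "finite F" "F \<subseteq> As" and s: "(\<Sum>x\<in>F. sc (c x) x) \<in> M"
        have "(\<Sum>x\<in>F. sc (c x) x) \<in> B" using F AsB by (intro subspace_sum[OF Bs] subspace_scale[OF Bs]) auto
        hence "(\<Sum>x\<in>F. sc (c x) x) \<in> MB" using s unfolding MB_def by blast
        thus "\<forall>x\<in>F. c x = 0" by (rule qbD(2)[OF qb F])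
      qed
      obtain As' where As': "As \<subseteq> As'" "quot_basis sc UNIV M As'"
        using extend_qb[OF LA_vs[OF LA] Ms X] by blast
      obtain act :: "'a \<Rightarrow> ('a, 'k) mpoly \<Rightarrow> 'a" where A: "fit_module_action sc br M As' act"
        and T: "torsion_free_action M As' act" using UAq[OF As'(2)] by blast
      have PP: "polys_in As \<subseteq> polys_in As'" using As'(1) by (rule polys_in_mono)
      have MBM: "MB \<subseteq> M" unfolding MB_def by blast
      have cl: "\<forall>b\<in>MB. \<forall>p\<in>polys_in As. act b p \<in> MB"
      proof (rule act_closed[OF LA_vs[OF LA] A As'(1) MBM MBs])
        show "\<forall>b\<in>MB. \<forall>a\<in>As. br b a \<in> MB" using Mbr Bbr AsB unfolding MB_def by blast
      qed
      show "\<exists>act :: 'a \<Rightarrow> ('a, 'k) mpoly \<Rightarrow> 'a. fit_module_action sc br MB As act \<and> torsion_free_action MB As act"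
      proof (intro exI conjI)
        show "fit_module_action sc br MB As act"
          unfolding fit_module_action_def
        proof (intro conjI ballI allI)
          show "\<And>b p. b \<in> MB \<Longrightarrow> p \<in> polys_in As \<Longrightarrow> act b p \<in> MB" using cl by blast
          show "\<And>b b' p. b \<in> MB \<Longrightarrow> b' \<in> MB \<Longrightarrow> p \<in> polys_in As \<Longrightarrow> act (b + b') p = act b p + act b' p"
            using fma_add1[OF A] MBM PP by blast
          show "\<And>b p q. b \<in> MB \<Longrightarrow> p \<in> polys_in As \<Longrightarrow> q \<in> polys_in As \<Longrightarrow> act b (p + q) = act b p + act b q"
            using fma_add2[OF A] MBM PP by blast
          show "\<And>b p q. b \<in> MB \<Longrightarrow> p \<in> polys_in As \<Longrightarrow> q \<in> polys_in As \<Longrightarrow> act b (p * q) = act (act b p) q"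
            using fma_mul[OF A] MBM PP by blast
          show "\<And>b c. b \<in> MB \<Longrightarrow> act b (const c) = sc c b"
            using fma_const[OF A] MBM by blast
          show "\<And>b a. b \<in> MB \<Longrightarrow> a \<in> As \<Longrightarrow> act b (var a) = br b a"
            using fma_var[OF A] MBM As'(1) by blast
        qed
        show "torsion_free_action MB As act"
          using T MBM PP unfolding torsion_free_action_def by blast
      qed
    qed
  next
    case False
    then obtain N where N: "lie_ideal sc br B N" "nilpotent_lie sc br N" and NM: "\<not> N \<subseteq> M" by blast
    then obtain b where b: "b \<in> N" "b \<notin> M" by blast
    obtain n0 where n0: "lcs sc br N n0 = {0}" using N(2) unfolding nilpotent_lie_def by blast
    have Ns: "subspace N" and NB: "N \<subseteq> B" and Nbr: "\<And>x y. x \<in> N \<Longrightarrow> y \<in> B \<Longrightarrow> br x y \<in> N"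
      using N(1) unfolding lie_ideal_def by blast+
    have iter: "((\<lambda>z. br z b) ^^ n) y \<in> M \<and> ((\<lambda>z. br z b) ^^ n) y \<noteq> 0 \<and> ((\<lambda>z. br z b) ^^ n) y \<in> lcs sc br N n"
      if y: "y \<in> M" "y \<noteq> 0" "y \<in> N" for y n
    proof (induct n)
      case 0 thus ?case using y by simp
    next
      case (Suc n)
      let ?z = "((\<lambda>z. br z b) ^^ n) y"
      have "br ?z b \<in> M" using Suc Mbr by blast
      moreover have "br ?z b \<noteq> 0" using Suc adinj[OF LA UA, of b ?z] b(2) unfolding M_def by blast
      moreover have "br ?z b \<in> lcs sc br N (Suc n)"
        using Suc b(1) by (auto intro!: span_base)
      ultimately show ?case by simp
    qed
    have NM0: "\<And>y. y \<in> N \<Longrightarrow> y \<in> M \<Longrightarrow> y = 0"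
    proof (rule ccontr)
      fix y assume "y \<in> N" "y \<in> M" "y \<noteq> 0"
      thus False using iter[of y n0] n0 by blast
    qed
    have BM0: "\<And>y. y \<in> B \<Longrightarrow> y \<in> M \<Longrightarrow> y = 0"
    proof (rule ccontr)
      fix y assume y: "y \<in> B" "y \<in> M" "y \<noteq> 0"
      have ne: "br y b \<noteq> 0" using adinj[OF LA UA, of b y] y b(2) unfolding M_def by blast
      have inM: "br y b \<in> M" using Mbr y by blast
      have "br b y \<in> N" using Nbr b(1) y(1) by blast
      hence "- br b y \<in> N" by (rule subspace_neg[OF Ns])
      hence "br y b \<in> N" using LA_anti[OF LA, of y b] by simp
      thus False using NM0 inM ne by blast
    qed
    have Bab: "abelian_set br B" unfolding abelian_set_def using BM0 Bbr brM by blast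
    have Bid: "lie_ideal sc br B B" using Bs Bbr unfolding lie_ideal_def by blast
    have "B \<subseteq> Fit sc br B" by (rule fit_upper[OF Bid abelian_nilp[OF LA Bab]])
    moreover have "Fit sc br B \<subseteq> B" using FBid unfolding lie_ideal_def by blast
    ultimately have FB: "Fit sc br B = B" by blast
    show ?thesis unfolding U_algebra_def FB
    proof (intro conjI allI impI)
      show "abelian_set br B" by (rule Bab)
      fix As assume qb: "quot_basis sc B B As"
      have As0: "As = {}"
      proof (rule ccontr)
        assume "As \<noteq> {}"
        then obtain a where a: "a \<in> As" by blast
        hence aB: "a \<in> B" using qbD(1)[OF qb] by blast
        have h: "finite {a}" "{a} \<subseteq> As" using a by auto
        have "(\<Sum>x\<in>{a}. sc ((\<lambda>_. 1::'k) x) x) \<in> B" using aB by simp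
        from qbD(2)[OF qb h this] show False by simp
      qed
      define act :: "'a \<Rightarrow> ('a, 'k) mpoly \<Rightarrow> 'a" where "act b p = sc (Poly_Mapping.lookup p 0) b" for b p
      show "\<exists>act :: 'a \<Rightarrow> ('a, 'k) mpoly \<Rightarrow> 'a. fit_module_action sc br B As act \<and> torsion_free_action B As act"
      proof (intro exI conjI)
        show "fit_module_action sc br B As act"
          unfolding fit_module_action_def As0
        proof (intro conjI ballI allI)
          show "\<And>b p. b \<in> B \<Longrightarrow> act b p \<in> B" unfolding act_def by (rule subspace_scale[OF Bs])
          show "\<And>b b' p. act (b + b') p = act b p + act b' p" unfolding act_def by (simp add: scale_right_distrib)
          show "\<And>b p q. act b (p + q) = act b p + act b q" unfolding act_def by (simp add: lookup_add scale_left_distrib)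
          show "\<And>b c. act b (const c) = sc c b" unfolding act_def const_def by simp
          show "\<And>b a. a \<in> {} \<Longrightarrow> act b (var a) = br b a" by simp
          fix b :: 'a and p q :: "('a, 'k) mpoly" assume p: "p \<in> polys_in ({}::'a set)" and q: "q \<in> polys_in ({}::'a set)"
          have "p * q = Poly_Mapping.single 0 (Poly_Mapping.lookup p 0) * Poly_Mapping.single 0 (Poly_Mapping.lookup q 0)"
            using const_poly[OF p] const_poly[OF q] by simp
          hence "Poly_Mapping.lookup (p * q) 0 = Poly_Mapping.lookup p 0 * Poly_Mapping.lookup q 0"
            by (simp add: mult_single)
          thus "act b (p * q) = act (act b p) q" unfolding act_def by (simp add: mult.commute)
        qed
        show "torsion_free_action B As act"
          unfolding torsion_free_action_def As0
        proof (intro ballI impI)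
          fix b :: 'a and p :: "('a, 'k) mpoly" assume b: "b \<noteq> 0" and p: "p \<in> polys_in ({}::'a set)" "p \<noteq> 0"
          have "Poly_Mapping.lookup p 0 \<noteq> 0" using const_poly[OF p(1)] p(2) by (metis single_zero)
          thus "act b p \<noteq> 0" unfolding act_def using b by simp
        qed
      qed
    qed
  qed
qed

end
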